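(* For every integer $b\ge0$, let $\mathcal{P}(b)$ be the set of unordered partitions of $b$ and for $q\in\mathcal{P}(b)$ let $o(q)$ be the number of parts of $q$ equal to $1$. Then \[ \operatorname{trace}(A_b)=\sum_{q\in\mathcal{P}(b)}2^{o(q)}. \]
   Context: For an integer $b\ge 0$, an ordered partition of $b$ is a finite sequence $(q_1,\ldots,q_k)$ of positive integers summing to $b$ (for $b=0$ the only one is the empty sequence). An ordered partition $(q_1,\ldots,q_k)$ with $k\ge1$ is nontrivially embedded into an ordered partition $(r_1,\ldots,r_\ell)$ by a choice of indices $1\le i_2<\cdots<i_k\le \ell$ with $q_j\le r_{i_j}$ for $2\le j\le k$; different index tuples count as different embeddings. A card for $b$ balls is either (i) a trivial card, given by an ordered partition $q$ of $b$, with left and right partitions both $q$; or (ii) a throw card, given by ordered partitions $q$ ($k\ge1$ parts) and $r$ of $b$ together with a nontrivial embedding of $q$ into $r$, with left partition $q$ and right partition $r$. Different index tuples give different cards, and a throw card is distinct from the trivial card even when $q=r$. $A_b$ is the square matrix with rows and columns indexed by the ordered partitions of $b$ whose $(u,v)$ entry is the number of cards for $b$ balls with left partition $u$ and right partition $v$. *)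

theory Defs
  imports Main "HOL-Library.Multiset"
begin

definition ordered_partitions :: "nat \<Rightarrow> nat list set" where
  "ordered_partitions b = {q. (\<forall>x\<in>set q. 0 < x) \<and> sum_list q = b}"

text \<open>Nontrivial embeddings of q = (q_1,...,q_k), k \<ge> 1, into r = (r_1,...,r_l):
  index tuples 1 \<le> i_2 < ... < i_k \<le> l with q_j \<le> r_{i_j} for 2 \<le> j \<le> k.
  Encoded 0-based: a list ix of length k-1, where ix!(j-2) = i_j - 1.\<close>
definition nontriv_embeddings :: "nat list \<Rightarrow> nat list \<Rightarrow> nat list set" where
  "nontriv_embeddings q r =
     {ix. q \<noteq> [] \<and> length ix = length q - 1 \<and> sorted_wrt (<) ix \<and>
          (\<forall>i\<in>set ix. i < length r) \<and>
          (\<forall>j < length ix. q ! (Suc j) \<le> r ! (ix ! j))}"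

datatype juggling_card = Trivial "nat list" | Throw "nat list" "nat list" "nat list"

fun left_part :: "juggling_card \<Rightarrow> nat list" where
  "left_part (Trivial q) = q"
| "left_part (Throw q r ix) = q"

fun right_part :: "juggling_card \<Rightarrow> nat list" where
  "right_part (Trivial q) = q"
| "right_part (Throw q r ix) = r"

definition cards :: "nat \<Rightarrow> juggling_card set" where
  "cards b = {Trivial q | q. q \<in> ordered_partitions b} \<union>
             {Throw q r ix | q r ix. q \<in> ordered_partitions b \<and> r \<in> ordered_partitions b \<and>
                 q \<noteq> [] \<and> ix \<in> nontriv_embeddings q r}"

definition A_entry :: "nat \<Rightarrow> nat list \<Rightarrow> nat list \<Rightarrow> nat" where
  "A_entry b u v = card {c \<in> cards b. left_part c = u \<and> right_part c = v}"

definition trace_A :: "nat \<Rightarrow> nat" where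
  "trace_A b = (\<Sum>u\<in>ordered_partitions b. A_entry b u u)"

definition unordered_partitions :: "nat \<Rightarrow> nat multiset set" where
  "unordered_partitions b = {p. (\<forall>x\<in>#p. 0 < x) \<and> sum_mset p = b}"

end

theory Submission imports Defs begin

lemma finite_OP: "finite (ordered_partitions b)"
proof -
  have "ordered_partitions b \<subseteq> {xs. set xs \<subseteq> {0..b} \<and> length xs \<le> b}"
  proof
    fix xs assume "xs \<in> ordered_partitions b"
    hence p: "\<forall>x\<in>set xs. 0 < x" "sum_list xs = b" by (auto simp: ordered_partitions_def)
    have "set xs \<subseteq> {0..b}" using p by (auto dest: member_le_sum_list)
    moreover have "length xs \<le> sum_list xs" using p(1)
      by (induction xs) auto
    ultimately show "xs \<in> {xs. set xs \<subseteq> {0..b} \<and> length xs \<le> b}" using p by auto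
  qed
  thus ?thesis by (rule finite_subset) (simp add: finite_lists_length_le)
qed

lemma finite_emb: "finite (nontriv_embeddings q r)"
proof -
  have "nontriv_embeddings q r \<subseteq> {xs. set xs \<subseteq> {..<length r} \<and> length xs = length q - 1}"
    by (auto simp: nontriv_embeddings_def)
  thus ?thesis by (rule finite_subset) (simp add: finite_lists_length_eq)
qed

definition ixd :: "nat \<Rightarrow> nat \<Rightarrow> nat list" where
  "ixd k d = [0..<d] @ [Suc d..<k]"

lemma ixd_len: "d < k \<Longrightarrow> length (ixd k d) = k - 1"
  by (simp add: ixd_def)

lemma ixd_nth: "d < k \<Longrightarrow> j < k - 1 \<Longrightarrow> ixd k d ! j = (if j < d then j else Suc j)"
  by (simp add: ixd_def nth_append)

lemma ixd_set: "d < k \<Longrightarrow> set (ixd k d) = {0..<k} - {d}"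
  by (auto simp: ixd_def)

lemma ixd_sorted: "sorted_wrt (<) (ixd k d)"
  by (simp add: ixd_def sorted_wrt_append)

lemma ixd_inj: "inj_on (ixd k) {..<k}"
proof
  fix d d' assume "d \<in> {..<k}" "d' \<in> {..<k}" "ixd k d = ixd k d'"
  hence "{0..<k} - {d} = {0..<k} - {d'}" by (metis ixd_set lessThan_iff)
  moreover have "d \<in> {0..<k}" using \<open>d \<in> {..<k}\<close> by simp
  ultimately show "d = d'" by blast
qed

lemma ixd_all:
  assumes "sorted_wrt (<) ix" "length ix = k - 1" "\<forall>i\<in>set ix. i < k" "k > 0"
  shows "\<exists>d<k. ix = ixd k d"
proof -
  have dis: "distinct ix" and so: "sorted ix" using assms(1) by (auto simp: strict_sorted_iff)
  have sub: "set ix \<subseteq> {0..<k}" using assms(3) by auto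
  have "card (set ix) = k - 1" using dis assms(2) by (simp add: distinct_card)
  hence "card ({0..<k} - set ix) = 1" using sub assms(4)
    by (simp add: card_Diff_subset finite_subset)
  then obtain d where d: "{0..<k} - set ix = {d}" by (auto simp: card_Suc_eq)
  hence dk: "d < k" by auto
  have "set ix = {0..<k} - {d}" using d sub by auto
  hence "set ix = set (ixd k d)" using dk ixd_set by simp
  moreover have "sorted (ixd k d)" "distinct (ixd k d)" using ixd_sorted[of k d] by (auto simp: strict_sorted_iff)
  ultimately have "ix = ixd k d" using dis so sorted_distinct_set_unique by blast
  thus ?thesis using dk by blast
qed

lemma cond_iff:
  fixes u :: "nat list"
  assumes "d < length u"
  shows "(\<forall>j < length u - 1. u ! Suc j \<le> u ! (ixd (length u) d ! j)) \<longleftrightarrow> sorted_wrt (\<ge>) (take (Suc d) u)"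
proof -
  have "(\<forall>j < length u - 1. u ! Suc j \<le> u ! (ixd (length u) d ! j)) \<longleftrightarrow> (\<forall>j < d. u ! Suc j \<le> u ! j)"
    using assms by (auto simp: ixd_nth)
  also have "\<dots> \<longleftrightarrow> sorted_wrt (\<ge>) (take (Suc d) u)"
    using assms by (subst sorted_wrt_iff_nth_Suc_transp) (auto simp: transp_def)
  finally show ?thesis .
qed

lemma emb_eq: "nontriv_embeddings u u = ixd (length u) ` {d. d < length u \<and> sorted_wrt (\<ge>) (take (Suc d) u)}"
proof (cases "u = []")
  case True thus ?thesis by (simp add: nontriv_embeddings_def)
next
  case False
  show ?thesis
  proof
    show "nontriv_embeddings u u \<subseteq> ixd (length u) ` {d. d < length u \<and> sorted_wrt (\<ge>) (take (Suc d) u)}"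
    proof
      fix ix assume "ix \<in> nontriv_embeddings u u"
      hence h: "sorted_wrt (<) ix" "length ix = length u - 1" "\<forall>i\<in>set ix. i < length u"
        "\<forall>j < length ix. u ! (Suc j) \<le> u ! (ix ! j)"
        by (auto simp: nontriv_embeddings_def)
      obtain d where d: "d < length u" "ix = ixd (length u) d" using ixd_all[OF h(1-3)] False by auto
      have "sorted_wrt (\<ge>) (take (Suc d) u)" using cond_iff[OF d(1)] h(4) h(2) d(2) by auto
      thus "ix \<in> ixd (length u) ` {d. d < length u \<and> sorted_wrt (\<ge>) (take (Suc d) u)}" using d by auto
    qed
  next
    show "ixd (length u) ` {d. d < length u \<and> sorted_wrt (\<ge>) (take (Suc d) u)} \<subseteq> nontriv_embeddings u u"
    proof
      fix ix assume "ix \<in> ixd (length u) ` {d. d < length u \<and> sorted_wrt (\<ge>) (take (Suc d) u)}"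
      then obtain d where d: "d < length u" "sorted_wrt (\<ge>) (take (Suc d) u)" "ix = ixd (length u) d" by auto
      show "ix \<in> nontriv_embeddings u u"
        unfolding nontriv_embeddings_def
        using False d cond_iff[OF d(1)] ixd_len[OF d(1)] ixd_sorted[of "length u" d] ixd_set[OF d(1)]
        by auto
    qed
  qed
qed

lemma card_emb: "card (nontriv_embeddings u u) = card {d. d < length u \<and> sorted_wrt (\<ge>) (take (Suc d) u)}"
proof -
  have "inj_on (ixd (length u)) {d. d < length u \<and> sorted_wrt (\<ge>) (take (Suc d) u)}"
    by (rule inj_on_subset[OF ixd_inj]) auto
  thus ?thesis unfolding emb_eq by (rule card_image)
qed


lemma emb_ne: "ix \<in> nontriv_embeddings q r \<Longrightarrow> q \<noteq> []"
  by (simp add: nontriv_embeddings_def)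

lemma A_diag:
  assumes "u \<in> ordered_partitions b"
  shows "A_entry b u u = Suc (card (nontriv_embeddings u u))"
proof -
  have eq: "{c \<in> cards b. left_part c = u \<and> right_part c = u}
        = insert (Trivial u) (Throw u u ` nontriv_embeddings u u)"
  proof (rule set_eqI)
    fix c show "c \<in> {c \<in> cards b. left_part c = u \<and> right_part c = u} \<longleftrightarrow>
        c \<in> insert (Trivial u) (Throw u u ` nontriv_embeddings u u)"
      using assms by (cases c) (auto simp: cards_def dest: emb_ne)
  qed
  have inj: "inj_on (Throw u u) (nontriv_embeddings u u)" by (auto simp: inj_on_def)
  have "Trivial u \<notin> Throw u u ` nontriv_embeddings u u" by auto
  hence "card (insert (Trivial u) (Throw u u ` nontriv_embeddings u u))
      = Suc (card (Throw u u ` nontriv_embeddings u u))"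
    using finite_emb by (simp add: card_insert_disjoint)
  also have "\<dots> = Suc (card (nontriv_embeddings u u))" using card_image[OF inj] by simp
  finally show ?thesis unfolding A_entry_def eq .
qed

definition Mset :: "nat list \<Rightarrow> nat set" where
  "Mset u = {m. m \<le> length u \<and> sorted_wrt (\<ge>) (take m u)}"

lemma finite_Mset: "finite (Mset u)"
  by (rule finite_subset[of _ "{..length u}"]) (auto simp: Mset_def)

lemma card_Mset: "card (Mset u) = Suc (card {d. d < length u \<and> sorted_wrt (\<ge>) (take (Suc d) u)})"
proof -
  let ?D = "{d. d < length u \<and> sorted_wrt (\<ge>) (take (Suc d) u)}"
  have eq: "Mset u = insert 0 (Suc ` ?D)"
  proof (rule set_eqI)
    fix m show "m \<in> Mset u \<longleftrightarrow> m \<in> insert 0 (Suc ` ?D)"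
      by (cases m) (auto simp: Mset_def)
  qed
  have fin: "finite ?D" by (rule finite_subset[of _ "{..<length u}"]) auto
  have "card (insert 0 (Suc ` ?D)) = Suc (card (Suc ` ?D))"
    using fin by (subst card_insert_disjoint) auto
  also have "\<dots> = Suc (card ?D)" by (simp add: card_image)
  finally show ?thesis using eq by simp
qed

lemma trace_Mset: "trace_A b = (\<Sum>u\<in>ordered_partitions b. card (Mset u))"
  unfolding trace_A_def by (rule sum.cong) (auto simp: A_diag card_Mset card_emb)

definition NIP :: "nat \<Rightarrow> nat list set" where
  "NIP m = {l. sorted_wrt (\<ge>) l \<and> (\<forall>x\<in>set l. 0 < x) \<and> sum_list l = m}"

lemma NIP_sub: "NIP m \<subseteq> ordered_partitions m"
  by (auto simp: NIP_def ordered_partitions_def)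

lemma finite_NIP: "finite (NIP m)"
  using finite_subset[OF NIP_sub finite_OP] .

lemma trace_Sigma: "trace_A b = (\<Sum>n\<le>b. card (NIP (b - n)) * card (ordered_partitions n))"
proof -
  let ?S = "Sigma (ordered_partitions b) Mset"
  let ?T = "Sigma {..b} (\<lambda>n. NIP (b - n) \<times> ordered_partitions n)"
  let ?f = "\<lambda>(u, m). (sum_list (drop m u), take m u, drop m u)"
  let ?g = "\<lambda>(n::nat, l::nat list, v::nat list). (l @ v, length l)"
  have "bij_betw ?f ?S ?T"
  proof (rule bij_betw_byWitness[where f' = ?g])
    show "\<forall>a\<in>?S. ?g (?f a) = a" by (auto simp: Mset_def)
    show "\<forall>a\<in>?T. ?f (?g a) = a" by (auto simp: ordered_partitions_def)
    show "?f ` ?S \<subseteq> ?T"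
    proof
      fix x assume "x \<in> ?f ` ?S"
      then obtain u m where um: "u \<in> ordered_partitions b" "m \<in> Mset u" "x = ?f (u, m)" by auto
      have pos: "\<forall>x\<in>set u. 0 < x" and s: "sum_list u = b" using um(1) by (auto simp: ordered_partitions_def)
      have "sum_list (take m u) + sum_list (drop m u) = b"
        using s by (metis append_take_drop_id sum_list_append)
      moreover have "\<forall>x\<in>set (take m u). 0 < x" "\<forall>x\<in>set (drop m u). 0 < x"
        using pos by (auto dest: in_set_takeD in_set_dropD)
      ultimately show "x \<in> ?T" using um(2,3)
        by (auto simp: Mset_def NIP_def ordered_partitions_def)
    qed
    show "?g ` ?T \<subseteq> ?S"
      by (auto simp: Mset_def NIP_def ordered_partitions_def)
  qed
  hence "card ?S = card ?T" by (rule bij_betw_same_card)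
  moreover have "card ?S = (\<Sum>u\<in>ordered_partitions b. card (Mset u))"
    using finite_OP finite_Mset by simp
  moreover have "card ?T = (\<Sum>n\<le>b. card (NIP (b - n)) * card (ordered_partitions n))"
    using finite_OP finite_NIP by (simp add: card_cartesian_product)
  ultimately show ?thesis using trace_Mset by simp
qed

lemma card_NIP: "card (NIP m) = card (unordered_partitions m)"
proof -
  have "bij_betw mset (NIP m) (unordered_partitions m)"
  proof (rule bij_betw_imageI)
    show "inj_on mset (NIP m)"
    proof
      fix l1 l2 assume "l1 \<in> NIP m" "l2 \<in> NIP m" "mset l1 = mset l2"
      hence s1: "sorted (rev l1)" and s2: "sorted (rev l2)" and me: "mset (rev l1) = mset (rev l2)"
        by (auto simp: NIP_def sorted_wrt_rev)
      have "sort (rev l2) = rev l1" using properties_for_sort[OF me s1] .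
      hence "rev l2 = rev l1" using sorted_sort_id[OF s2] by simp
      thus "l1 = l2" by simp
    qed
    show "mset ` NIP m = unordered_partitions m"
    proof
      show "mset ` NIP m \<subseteq> unordered_partitions m"
        by (auto simp: NIP_def unordered_partitions_def sum_mset_sum_list)
      show "unordered_partitions m \<subseteq> mset ` NIP m"
      proof
        fix p assume p: "p \<in> unordered_partitions m"
        let ?l = "rev (sorted_list_of_multiset p)"
        have "mset ?l = p" by simp
        moreover have "?l \<in> NIP m"
          using p unfolding NIP_def unordered_partitions_def
          by (auto simp: sorted_wrt_rev simp flip: sum_mset_sum_list)
        ultimately show "p \<in> mset ` NIP m" by (metis image_eqI)
      qed
    qed
  qed
  thus ?thesis by (rule bij_betw_same_card)
qed


definition H :: "nat \<Rightarrow> nat multiset set" where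
  "H j = {p \<in> unordered_partitions j. count p 1 = 0}"

lemma finite_UP: "finite (unordered_partitions m)"
proof -
  have "unordered_partitions m \<subseteq> mset ` ordered_partitions m"
  proof
    fix p assume p: "p \<in> unordered_partitions m"
    have "sorted_list_of_multiset p \<in> ordered_partitions m"
      using p unfolding ordered_partitions_def unordered_partitions_def
      by (auto simp flip: sum_mset_sum_list)
    thus "p \<in> mset ` ordered_partitions m" by (metis image_eqI mset_sorted_list_of_multiset)
  qed
  thus ?thesis using finite_OP finite_subset by blast
qed

lemma finite_H: "finite (H j)"
  using finite_UP[of j] by (simp add: H_def)

lemma split1: "p = {#x \<in># p. x \<noteq> 1#} + replicate_mset (count p 1) (1::nat)"
proof -
  have "p = {#x \<in># p. x \<noteq> 1#} + {#x \<in># p. \<not> x \<noteq> 1#}" by (rule multiset_partition)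
  also have "{#x \<in># p. \<not> x \<noteq> 1#} = {#x \<in># p. x = 1#}" by simp
  also have "\<dots> = replicate_mset (count p 1) 1" by (rule filter_eq_replicate_mset)
  finally show ?thesis .
qed

lemma UP_decomp:
  "(\<Sum>p\<in>unordered_partitions m. F p) = (\<Sum>j\<le>m. \<Sum>q\<in>H j. F (q + replicate_mset (m - j) 1))"
proof -
  let ?psi = "\<lambda>(j, q). q + replicate_mset (m - j) (1::nat)"
  let ?phi = "\<lambda>p. (m - count p 1, {#x \<in># p. x \<noteq> 1#})"
  have bij: "bij_betw ?psi (Sigma {..m} H) (unordered_partitions m)"
  proof (rule bij_betw_byWitness[where f' = ?phi])
    show "\<forall>a\<in>Sigma {..m} H. ?phi (?psi a) = a"
    proof
      fix a assume "a \<in> Sigma {..m} H"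
      then obtain j q where a: "a = (j, q)" "j \<le> m" "q \<in> H j" by auto
      have c: "count q 1 = 0" using a(3) by (simp add: H_def)
      have "{#x \<in># q + replicate_mset (m - j) 1. x \<noteq> 1#} = q"
        by (rule multiset_eqI) (use c in auto)
      thus "?phi (?psi a) = a" using a c by simp
    qed
    show "\<forall>a\<in>unordered_partitions m. ?psi (?phi a) = a"
    proof
      fix p assume p: "p \<in> unordered_partitions m"
      have "sum_mset p = sum_mset {#x \<in># p. x \<noteq> 1#} + count p 1"
        by (subst split1) simp
      hence "count p 1 \<le> m" using p by (simp add: unordered_partitions_def)
      hence "m - (m - count p 1) = count p 1" by simp
      thus "?psi (?phi p) = p" using split1[of p] by simp
    qed
    show "?psi ` Sigma {..m} H \<subseteq> unordered_partitions m"
    proof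
      fix x assume "x \<in> ?psi ` Sigma {..m} H"
      then obtain j q where a: "x = q + replicate_mset (m - j) 1" "j \<le> m" "q \<in> H j" by auto
      thus "x \<in> unordered_partitions m" by (auto simp: H_def unordered_partitions_def)
    qed
    show "?phi ` unordered_partitions m \<subseteq> Sigma {..m} H"
    proof
      fix x assume "x \<in> ?phi ` unordered_partitions m"
      then obtain p where p: "p \<in> unordered_partitions m" "x = ?phi p" by auto
      have "sum_mset p = sum_mset {#x \<in># p. x \<noteq> 1#} + count p 1"
        by (subst split1) simp
      hence e: "sum_mset {#x \<in># p. x \<noteq> 1#} + count p 1 = m" using p by (simp add: unordered_partitions_def)
      hence "sum_mset {#x \<in># p. x \<noteq> 1#} = m - count p 1" by (simp add: e[symmetric])
      thus "x \<in> Sigma {..m} H" using p by (auto simp: H_def unordered_partitions_def)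
    qed
  qed
  have "(\<Sum>j\<le>m. \<Sum>q\<in>H j. F (q + replicate_mset (m - j) 1)) = (\<Sum>a\<in>Sigma {..m} H. F (?psi a))"
    by (subst sum.Sigma) (auto simp: finite_H case_prod_unfold)
  also have "\<dots> = (\<Sum>p\<in>unordered_partitions m. F p)"
    by (rule sum.reindex_bij_betw[OF bij])
  finally show ?thesis by simp
qed

lemma card_UP: "card (unordered_partitions m) = (\<Sum>j\<le>m. card (H j))"
  using UP_decomp[of "\<lambda>_. 1::nat" m] by simp

lemma RHS_eq: "(\<Sum>p\<in>unordered_partitions b. 2 ^ count p 1) = (\<Sum>j\<le>b. card (H j) * (2::nat) ^ (b - j))"
  unfolding UP_decomp by (rule sum.cong) (auto simp: H_def)

lemma OP_Suc: "card (ordered_partitions (Suc n)) = (\<Sum>k\<le>n. card (ordered_partitions k))"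
proof -
  let ?psi = "\<lambda>(k, v). (Suc n - k) # v"
  let ?phi = "\<lambda>u. (Suc n - hd u, tl u)"
  have bij: "bij_betw ?psi (Sigma {..n} ordered_partitions) (ordered_partitions (Suc n))"
  proof (rule bij_betw_byWitness[where f' = ?phi])
    show "\<forall>a\<in>Sigma {..n} ordered_partitions. ?phi (?psi a) = a" by auto
    show "\<forall>a\<in>ordered_partitions (Suc n). ?psi (?phi a) = a"
    proof
      fix u assume u: "u \<in> ordered_partitions (Suc n)"
      then obtain x xs where "u = x # xs" by (cases u) (auto simp: ordered_partitions_def)
      thus "?psi (?phi u) = u" using u by (auto simp: ordered_partitions_def)
    qed
    show "?psi ` Sigma {..n} ordered_partitions \<subseteq> ordered_partitions (Suc n)"
      by (auto simp: ordered_partitions_def)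
    show "?phi ` ordered_partitions (Suc n) \<subseteq> Sigma {..n} ordered_partitions"
    proof
      fix x assume "x \<in> ?phi ` ordered_partitions (Suc n)"
      then obtain u where u: "u \<in> ordered_partitions (Suc n)" "x = ?phi u" by auto
      then obtain y ys where "u = y # ys" by (cases u) (auto simp: ordered_partitions_def)
      thus "x \<in> Sigma {..n} ordered_partitions" using u by (auto simp: ordered_partitions_def)
    qed
  qed
  have "card (ordered_partitions (Suc n)) = card (Sigma {..n} ordered_partitions)"
    using bij_betw_same_card[OF bij] by simp
  also have "\<dots> = (\<Sum>k\<le>n. card (ordered_partitions k))" using finite_OP by simp
  finally show ?thesis .
qed

lemma OP_0: "ordered_partitions 0 = {[]}"
  by (auto simp: ordered_partitions_def) (metis gr_implies_not0 list.set_intros(1) neq_Nil_conv)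

lemma sum_OP: "(\<Sum>k\<le>n. card (ordered_partitions k)) = 2 ^ n"
proof (induction n)
  case 0 thus ?case by (simp add: OP_0)
next
  case (Suc n)
  have "(\<Sum>k\<le>Suc n. card (ordered_partitions k)) = 2 ^ n + card (ordered_partitions (Suc n))"
    using Suc by simp
  also have "\<dots> = 2 ^ Suc n" using Suc by (simp add: OP_Suc)
  finally show ?case .
qed

lemma swap_tri:
  fixes F :: "nat \<Rightarrow> nat \<Rightarrow> nat"
  shows "(\<Sum>n\<le>b. \<Sum>j\<le>b - n. F n j) = (\<Sum>j\<le>b. \<Sum>n\<le>b - j. F n j)"
proof -
  have A: "(\<Sum>j\<le>b - n. F n j) = (\<Sum>j\<le>b. if n + j \<le> b then F n j else 0)" if "n \<le> b" for n
  proof -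
    have "(\<Sum>j\<le>b. if n + j \<le> b then F n j else 0) = sum (F n) {j\<in>{..b}. n + j \<le> b}"
      by (rule sum.inter_filter[symmetric]) simp
    also have "{j\<in>{..b}. n + j \<le> b} = {..b - n}" using that by auto
    finally show ?thesis by simp
  qed
  have B: "(\<Sum>n\<le>b - j. F n j) = (\<Sum>n\<le>b. if n + j \<le> b then F n j else 0)" if "j \<le> b" for j
  proof -
    have "(\<Sum>n\<le>b. if n + j \<le> b then F n j else 0) = sum (\<lambda>n. F n j) {n\<in>{..b}. n + j \<le> b}"
      by (rule sum.inter_filter[symmetric]) simp
    also have "{n\<in>{..b}. n + j \<le> b} = {..b - j}" using that by auto
    finally show ?thesis by simp
  qed
  have "(\<Sum>n\<le>b. \<Sum>j\<le>b - n. F n j) = (\<Sum>n\<le>b. \<Sum>j\<le>b. if n + j \<le> b then F n j else 0)"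
    by (rule sum.cong) (auto simp: A)
  also have "\<dots> = (\<Sum>j\<le>b. \<Sum>n\<le>b. if n + j \<le> b then F n j else 0)" by (rule sum.swap)
  also have "\<dots> = (\<Sum>j\<le>b. \<Sum>n\<le>b - j. F n j)"
    by (rule sum.cong) (auto simp: B)
  finally show ?thesis .
qed

theorem theorem11:
  fixes b :: nat
  shows "trace_A b = (\<Sum>p\<in>unordered_partitions b. 2 ^ count p 1)"
proof -
  have "trace_A b = (\<Sum>n\<le>b. card (unordered_partitions (b - n)) * card (ordered_partitions n))"
    by (simp add: trace_Sigma card_NIP)
  also have "\<dots> = (\<Sum>n\<le>b. \<Sum>j\<le>b - n. card (H j) * card (ordered_partitions n))"
    by (simp add: card_UP sum_distrib_right)
  also have "\<dots> = (\<Sum>j\<le>b. \<Sum>n\<le>b - j. card (H j) * card (ordered_partitions n))"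
    by (rule swap_tri)
  also have "\<dots> = (\<Sum>j\<le>b. card (H j) * 2 ^ (b - j))"
    by (simp add: sum_distrib_left[symmetric] sum_OP)
  also have "\<dots> = (\<Sum>p\<in>unordered_partitions b. 2 ^ count p 1)"
    by (rule RHS_eq[symmetric])
  finally show ?thesis .
qed

end
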